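(* Let $n\ge3$ and $1\le l\le n$, and put $\alpha^{(n)}_l=2\cos\frac{l\pi}{n+1}$. If $l$ is odd, then \[ \Phi_n(\alpha^{(n)}_l)=16\cos^2\frac{l\pi}{2(n+1)}>0. \] If $l$ is even, then $\Phi_n(\alpha^{(n)}_l)=0$ and \[ \Phi_n'(\alpha^{(n)}_l)=K^{(n)}_l\Big(\cos\frac{l\pi}{n+1}+\frac{n}{n+2}\Big)\neq0,\qquad K^{(n)}_l=\frac{2(n+1)(n+2)\big(1-\cos\frac{l\pi}{n+1}\big)}{\sin^2\frac{l\pi}{n+1}}>0. \]
   Context: $U_n$ is the Chebyshev polynomial of the second kind, $U_n(\cos\theta)=\sin((n+1)\theta)/\sin\theta$, $\tilde U_n(x)=U_n(x/2)$, and $\Phi_n(x)=((n+1)x^2-6x-4n)\tilde U_n(x)+2(x+2)\tilde U_{n-1}(x)+2(x+2)$. *)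

theory Defs
  imports "HOL-Analysis.Analysis"
begin

text \<open>Chebyshev polynomials of the second kind, via the standard recurrence:
  U_0 = 1, U_1 = 2x, U_(n+2) = 2x U_(n+1) - U_n.  These satisfy
  U_n(cos t) = sin((n+1)t)/sin t.\<close>
fun chebU :: "nat \<Rightarrow> real \<Rightarrow> real" where
  "chebU 0 x = 1"
| "chebU (Suc 0) x = 2 * x"
| "chebU (Suc (Suc n)) x = 2 * x * chebU (Suc n) x - chebU n x"

definition chebU_t :: "nat \<Rightarrow> real \<Rightarrow> real" where
  "chebU_t n x = chebU n (x / 2)"

definition Phi :: "nat \<Rightarrow> real \<Rightarrow> real" where
  "Phi n x = ((real n + 1) * x^2 - 6 * x - 4 * real n) * chebU_t n x
             + 2 * (x + 2) * chebU_t (n - 1) x + 2 * (x + 2)"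

end

theory Submission imports Defs begin

fun Sq :: "int \<Rightarrow> int \<Rightarrow> nat \<Rightarrow> int" where
  "Sq a b 0 = 2"
| "Sq a b (Suc 0) = a"
| "Sq a b (Suc (Suc m)) = a * Sq a b (Suc m) - b^2 * Sq a b m"

lemma cos_rec: "2 * cos (real (Suc (Suc m)) * t) = 2 * cos t * (2 * cos (real (Suc m) * t)) - 2 * cos (real m * t)"
proof -
  have "cos (real (Suc (Suc m)) * t) = cos ((real (Suc m) * t) + t)" by (simp add: algebra_simps)
  moreover have "cos (real m * t) = cos ((real (Suc m) * t) - t)" by (simp add: algebra_simps)
  ultimately show ?thesis by (simp add: cos_add cos_diff)
qed

lemma Sq_val: assumes "2 * cos t = real_of_int a / real_of_int b" "b \<noteq> 0"
  shows "real_of_int (Sq a b m) = real_of_int b ^ m * (2 * cos (real m * t))"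
proof -
  have "real_of_int (Sq a b m) = real_of_int b ^ m * (2 * cos (real m * t)) \<and>
        real_of_int (Sq a b (Suc m)) = real_of_int b ^ (Suc m) * (2 * cos (real (Suc m) * t))"
  proof (induction m)
    case 0 then show ?case using assms by simp
  next
    case (Suc m)
    have "real_of_int (Sq a b (Suc (Suc m))) = a * (real_of_int b ^ (Suc m) * (2 * cos (real (Suc m) * t)))
       - b^2 * (real_of_int b ^ m * (2 * cos (real m * t)))" using Suc by simp
    also have "\<dots> = real_of_int b ^ (Suc (Suc m)) * (2 * cos t * (2 * cos (real (Suc m) * t)) - 2 * cos (real m * t))"
      using assms by (simp add: field_simps power2_eq_square)
    also have "\<dots> = real_of_int b ^ (Suc (Suc m)) * (2 * cos (real (Suc (Suc m)) * t))"
      by (simp only: cos_rec)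
    finally show ?case using Suc by simp
  qed
  then show ?thesis by simp
qed

lemma Sq_cong: "m \<ge> 1 \<Longrightarrow> \<exists>k. Sq a b m = a ^ m + b * k"
proof -
  have "\<forall>m\<ge>1. (\<exists>k. Sq a b m = a ^ m + b * k) \<and> (\<exists>k. Sq a b (Suc m) = a ^ (Suc m) + b * k)"
  proof (intro allI impI)
    fix m :: nat assume "m \<ge> 1"
    then show "(\<exists>k. Sq a b m = a ^ m + b * k) \<and> (\<exists>k. Sq a b (Suc m) = a ^ (Suc m) + b * k)"
    proof (induction m rule: dec_induct)
      case base
      have h2: "Sq a b (Suc 1) = a ^ Suc 1 + b * (- 2 * b)" by (simp add: power2_eq_square)
      have h1: "Sq a b 1 = a ^ 1 + b * 0" by simp
      show ?case using h1 h2 by blast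
    next
      case (step m)
      then obtain k where m: "m = Suc k" by (cases m) auto
      from step obtain k1 where k1: "Sq a b (Suc m) = a ^ Suc m + b * k1" by blast
      have "Sq a b (Suc (Suc m)) = a ^ Suc (Suc m) + b * (a * k1 - b * Sq a b m)"
        by (simp add: k1 algebra_simps power2_eq_square)
      then show ?case using step by blast
    qed
  qed
  then show "m \<ge> 1 \<Longrightarrow> \<exists>k. Sq a b m = a ^ m + b * k" by blast
qed

lemma niven_aux:
  assumes "coprime a b" "b > 1" "2 * cos t = real_of_int a / real_of_int b" "M \<ge> 1"
  shows "cos (real M * t) \<noteq> 1"
proof
  assume c: "cos (real M * t) = 1"
  have "real_of_int (Sq a b M) = real_of_int (2 * b ^ M)"
    using Sq_val[OF assms(3), of M] assms(2) c by simp
  then have "Sq a b M = 2 * b ^ M" by linarith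
  obtain k where k: "Sq a b M = a ^ M + b * k" using Sq_cong[OF assms(4)] by blast
  have "b dvd Sq a b M" using \<open>Sq a b M = 2 * b ^ M\<close> assms(4) by (cases M) auto
  moreover have "a ^ M = Sq a b M - b * k" using k by simp
  ultimately have "b dvd a ^ M" by (metis dvd_diff dvd_triv_left)
  moreover have "coprime b (a ^ M)" using assms(1) by (simp add: coprime_commute)
  ultimately have "is_unit b" using coprime_absorb_right[of b "a ^ M"] assms(1) by (auto simp: coprime_commute)
  then show False using assms(2) by simp
qed

fun chebD :: "nat \<Rightarrow> real \<Rightarrow> real" where
  "chebD 0 x = 0"
| "chebD (Suc 0) x = 2"
| "chebD (Suc (Suc n)) x = 2 * chebU (Suc n) x + 2 * x * chebD (Suc n) x - chebD n x"

lemma chebU_deriv: "(chebU n has_real_derivative chebD n x) (at x)"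
proof -
  have "(chebU n has_real_derivative chebD n x) (at x) \<and> (chebU (Suc n) has_real_derivative chebD (Suc n) x) (at x)"
  proof (induction n)
    case 0
    have "((\<lambda>y. 2 * y) has_real_derivative 2) (at x)" by (auto intro!: derivative_eq_intros)
    then show ?case by (simp add: fun_eq_iff)
  next
    case (Suc n)
    then have h1: "(chebU (Suc n) has_real_derivative chebD (Suc n) x) (at x)"
      and h2: "(chebU n has_real_derivative chebD n x) (at x)" by auto
    have "((\<lambda>y. 2 * y * chebU (Suc n) y - chebU n y) has_real_derivative
          (2 * chebU (Suc n) x + 2 * x * chebD (Suc n) x - chebD n x)) (at x)"
      apply (rule derivative_eq_intros h1 h2 refl)+
      by (simp add: algebra_simps)
    then show ?case using h1 by (simp add: fun_eq_iff)
  qed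
  then show ?thesis by simp
qed

lemma chebUt_deriv: "((\<lambda>x. chebU_t n x) has_real_derivative chebD n (x/2) / 2) (at x)"
proof -
  have "((\<lambda>x. chebU n (x/2)) has_real_derivative chebD n (x/2) * (1/2)) (at x)"
    by (rule DERIV_chain2[OF chebU_deriv]) (auto intro!: derivative_eq_intros)
  then show ?thesis by (simp add: chebU_t_def)
qed

definition PhiD :: "nat \<Rightarrow> real \<Rightarrow> real" where
  "PhiD n x = ((real n + 1) * (2 * x) - 6) * chebU_t n x
     + ((real n + 1) * x^2 - 6 * x - 4 * real n) * (chebD n (x/2) / 2)
     + 2 * chebU_t (n - 1) x + 2 * (x + 2) * (chebD (n - 1) (x/2) / 2) + 2"

lemma Phi_deriv: "(Phi n has_real_derivative PhiD n x) (at x)"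
proof -
  have d1: "(chebU_t n has_real_derivative chebD n (x/2) / 2) (at x)" using chebUt_deriv by simp
  have d2: "(chebU_t (n-1) has_real_derivative chebD (n-1) (x/2) / 2) (at x)" using chebUt_deriv by simp
  have "((\<lambda>x. ((real n + 1) * x^2 - 6 * x - 4 * real n) * chebU_t n x
             + 2 * (x + 2) * chebU_t (n - 1) x + 2 * (x + 2)) has_real_derivative PhiD n x) (at x)"
    unfolding PhiD_def
    apply (rule derivative_eq_intros d1 d2 refl)+
    apply (simp add: algebra_simps)
    done
  then show ?thesis unfolding Phi_def[abs_def] .
qed
lemma chebD_id: "(1 - x^2) * chebD (Suc n) x = - (real n + 1) * x * chebU (Suc n) x + (real n + 2) * chebU n x"
proof -
  have "(1 - x^2) * chebD (Suc n) x = - (real n + 1) * x * chebU (Suc n) x + (real n + 2) * chebU n x \<and>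
        (1 - x^2) * chebD (Suc (Suc n)) x = - (real n + 2) * x * chebU (Suc (Suc n)) x + (real n + 3) * chebU (Suc n) x"
  proof (induction n)
    case 0 then show ?case by (simp add: algebra_simps power2_eq_square)
  next
    case (Suc n)
    have IH1: "(1 - x^2) * chebD (Suc n) x = - (real n + 1) * x * chebU (Suc n) x + (real n + 2) * chebU n x"
      and IH2: "(1 - x^2) * chebD (Suc (Suc n)) x = - (real n + 2) * x * chebU (Suc (Suc n)) x + (real n + 3) * chebU (Suc n) x"
      using Suc by auto
    have "(1 - x^2) * chebD (Suc (Suc (Suc n))) x = 2 * (1 - x^2) * chebU (Suc (Suc n)) x + 2 * x * ((1 - x^2) * chebD (Suc (Suc n)) x) - (1 - x^2) * chebD (Suc n) x"
      by (simp add: algebra_simps)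
    also have "\<dots> = - (real (Suc n) + 2) * x * chebU (Suc (Suc (Suc n))) x + (real (Suc n) + 3) * chebU (Suc (Suc n)) x"
      unfolding IH1 IH2 by (simp add: algebra_simps power2_eq_square)
    finally show ?case using IH2 by (simp add: algebra_simps)
  qed
  then show ?thesis by simp
qed

lemma chebU_sin: "chebU n (cos t) * sin t = sin ((real n + 1) * t)"
proof -
  have "chebU n (cos t) * sin t = sin ((real n + 1) * t) \<and> chebU (Suc n) (cos t) * sin t = sin ((real n + 2) * t)"
  proof (induction n)
    case 0 then show ?case by (simp add: sin_double)
  next
    case (Suc n)
    have e1: "sin ((real n + 3) * t) = sin ((real n + 2) * t + t)" by (simp add: algebra_simps)
    have e2: "sin ((real n + 1) * t) = sin ((real n + 2) * t - t)" by (simp add: algebra_simps)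
    have "chebU (Suc (Suc n)) (cos t) * sin t = 2 * cos t * (chebU (Suc n) (cos t) * sin t) - chebU n (cos t) * sin t"
      by (simp add: algebra_simps)
    also have "\<dots> = sin ((real n + 3) * t)" using Suc unfolding e1 by (simp add: e2 sin_add sin_diff)
    finally show ?case using Suc by (simp add: algebra_simps)
  qed
  then show ?thesis by simp
qed


theorem lemma4p11:
  fixes n l :: nat
  assumes "n \<ge> 3" and "1 \<le> l" and "l \<le> n"
  defines "\<alpha> \<equiv> 2 * cos (real l * pi / (real n + 1))"
  defines "K \<equiv> 2 * (real n + 1) * (real n + 2) * (1 - cos (real l * pi / (real n + 1)))
                 / (sin (real l * pi / (real n + 1)))^2"
  shows "(odd l \<longrightarrow> Phi n \<alpha> = 16 * (cos (real l * pi / (2 * (real n + 1))))^2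
                       \<and> Phi n \<alpha> > 0)
       \<and> (even l \<longrightarrow> Phi n \<alpha> = 0
                       \<and> deriv (Phi n) \<alpha> = K * (cos (real l * pi / (real n + 1)) + real n / (real n + 2))
                       \<and> deriv (Phi n) \<alpha> \<noteq> 0
                       \<and> K > 0)"
proof -
  define \<theta> where "\<theta> = real l * pi / (real n + 1)"
  define c where "c = cos \<theta>"
  define s where "s = sin \<theta>"
  have th0: "0 < \<theta>" using assms(2) by (simp add: \<theta>_def)
  have thpi: "\<theta> < pi"
  proof -
    have "real l < real n + 1" using assms(3) by simp
    then have "real l * pi < (real n + 1) * pi" by simp
    then show ?thesis unfolding \<theta>_def by (simp add: divide_less_eq mult.commute)
  qed
  have spos: "s > 0" unfolding s_def using th0 thpi by (rule sin_gt_zero)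
  have clt: "c < 1" unfolding c_def using th0 thpi
    by (metis cos_monotone_0_pi cos_zero less_eq_real_def order.refl)
  have cgt: "c > -1" unfolding c_def using th0 thpi
    by (metis cos_monotone_0_pi cos_pi less_eq_real_def order.refl)
  have s2: "s^2 = 1 - c^2" unfolding s_def c_def by (simp add: sin_squared_eq)
  have al: "\<alpha> = 2 * c" by (simp add: \<alpha>_def c_def \<theta>_def)
  have al2: "\<alpha> / 2 = c" by (simp add: al)
  obtain m where nm: "n = Suc m" using assms(1) by (cases n) auto
  obtain k where mk: "m = Suc k" using assms(1) nm by (cases m) auto
  have nth: "(real n + 1) * \<theta> = real l * pi" unfolding \<theta>_def by simp
  have Un: "chebU n c = 0"
  proof -
    have "chebU n c * s = sin (real l * pi)" unfolding c_def s_def chebU_sin nth ..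
    then show ?thesis using spos by simp
  qed
  have Um: "chebU m c = - ((-1) ^ l)"
  proof -
    have "(real m + 1) * \<theta> = real l * pi - \<theta>" using nth nm by (simp add: algebra_simps)
    then have "chebU m c * s = sin (real l * pi - \<theta>)" unfolding c_def s_def chebU_sin by simp
    also have "\<dots> = - ((-1) ^ l) * s" by (simp add: sin_diff s_def)
    finally have "chebU m c * s = (- ((-1) ^ l)) * s" by simp
    then show ?thesis using spos by (simp only: mult_right_cancel less_irrefl)
  qed
  have Uk: "chebU k c = 2 * c * chebU m c"
    using Un unfolding nm mk by simp
  have Dn: "s^2 * chebD n c = (real n + 1) * chebU m c"
    using chebD_id[of c m] Un unfolding s2 nm by simp
  have Dm: "s^2 * chebD m c = (real n + 1) * c * chebU m c"
    using chebD_id[of c k] Uk unfolding s2 mk nm by (simp add: algebra_simps)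
  have Phi_val: "Phi n \<alpha> = 2 * (\<alpha> + 2) * (1 - (-1) ^ l)"
    unfolding Phi_def chebU_t_def al2 using Un Um nm by (simp add: algebra_simps)
  have odd_part: "odd l \<longrightarrow> Phi n \<alpha> = 16 * (cos (real l * pi / (2 * (real n + 1))))^2 \<and> Phi n \<alpha> > 0"
  proof
    assume "odd l"
    then have P: "Phi n \<alpha> = 8 * (1 + c)" using Phi_val al by simp
    have "c = 2 * (cos (real l * pi / (2 * (real n + 1))))^2 - 1"
    proof -
      have "2 * (real l * pi / (2 * (real n + 1))) = \<theta>" by (simp add: \<theta>_def field_simps)
      then show ?thesis unfolding c_def using cos_double_cos[of "real l * pi / (2 * (real n + 1))"] by simp
    qed
    then show "Phi n \<alpha> = 16 * (cos (real l * pi / (2 * (real n + 1))))^2 \<and> Phi n \<alpha> > 0"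
      using P cgt by simp
  qed
  have even_part: "even l \<longrightarrow> Phi n \<alpha> = 0
                       \<and> deriv (Phi n) \<alpha> = K * (cos (real l * pi / (real n + 1)) + real n / (real n + 2))
                       \<and> deriv (Phi n) \<alpha> \<noteq> 0
                       \<and> K > 0"
  proof
    assume ev: "even l"
    have s2pos: "s^2 > 0" using spos by simp
    have Kdef: "K = 2 * (real n + 1) * (real n + 2) * (1 - c) / s^2"
      unfolding K_def c_def s_def \<theta>_def ..
    have Kpos: "K > 0" unfolding Kdef using clt s2pos by simp
    have Um1: "chebU m c = -1" using Um ev by simp
    have Dn': "chebD n c = - (real n + 1) / s^2" using Dn Um1 s2pos by (simp add: field_simps)
    have Dm': "chebD m c = - (real n + 1) * c / s^2" using Dm Um1 s2pos by (simp add: field_simps)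
    have "deriv (Phi n) \<alpha> = PhiD n \<alpha>" by (rule DERIV_imp_deriv[OF Phi_deriv])
    also have "\<dots> = ((real n + 1) * \<alpha>^2 - 6 * \<alpha> - 4 * real n) * (chebD n c / 2)
       + 2 * (\<alpha> + 2) * (chebD m c / 2)"
      unfolding PhiD_def chebU_t_def al2 using Un Um1 nm by simp
    also have "\<dots> = K * (c + real n / (real n + 2))"
    proof -
      define u where "u = 1 / s^2"
      have nne: "real n + 2 \<noteq> 0" by simp
      have Dn'': "chebD n c = - (real n + 1) * u" unfolding Dn' u_def by simp
      have Dm'': "chebD m c = - (real n + 1) * c * u" unfolding Dm' u_def by simp
      have K'': "K = 2 * (real n + 1) * (real n + 2) * (1 - c) * u" unfolding Kdef u_def by simp
      define r where "r = real n / (real n + 2)"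
      have q: "(real n + 2) * r = real n" using nne unfolding r_def by simp
      have "K * (c + r) = 2 * (real n + 1) * (1 - c) * u * ((real n + 2) * c)
             + 2 * (real n + 1) * (1 - c) * u * ((real n + 2) * r)"
        unfolding K'' by (simp add: algebra_simps)
      also have "\<dots> = 2 * (real n + 1) * (1 - c) * u * ((real n + 2) * c + real n)"
        unfolding q by (simp add: algebra_simps)
      finally have R: "K * (c + r) = 2 * (real n + 1) * (1 - c) * u * ((real n + 2) * c + real n)" .
      define v where "v = u / 2"
      have uv: "u = 2 * v" unfolding v_def by simp
      have h1: "chebD n c / 2 = - (real n + 1) * v" unfolding Dn'' v_def by simp
      have h2: "chebD m c / 2 = - (real n + 1) * c * v" unfolding Dm'' v_def by simp
      show ?thesis unfolding r_def[symmetric] R h1 h2 al uv by (simp add: algebra_simps power2_eq_square)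
    qed
    finally have D: "deriv (Phi n) \<alpha> = K * (c + real n / (real n + 2))" .
    have cne: "c + real n / (real n + 2) \<noteq> 0"
    proof
      assume h: "c + real n / (real n + 2) = 0"
      define A :: int where "A = - 2 * int n"
      define B :: int where "B = int n + 2"
      define g where "g = gcd A B"
      have Bpos: "B > 0" unfolding B_def by simp
      have gpos: "g > 0" unfolding g_def using Bpos by simp
      define a where "a = A div g"
      define b where "b = B div g"
      have Aeq: "A = a * g" unfolding a_def g_def by simp
      have Beq: "B = b * g" unfolding b_def g_def by simp
      have cop: "coprime a b" unfolding a_def b_def g_def
        by (rule div_gcd_coprime) (use Bpos in auto)
      have bpos: "b > 0" using Bpos gpos unfolding Beq by (simp add: zero_less_mult_iff)
      have "2 * c = - 2 * real n / (real n + 2)" using h by (simp add: field_simps)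
      also have "\<dots> = real_of_int A / real_of_int B" unfolding A_def B_def by simp
      also have "\<dots> = real_of_int a / real_of_int b" unfolding Aeq Beq using gpos by simp
      finally have c2: "2 * cos \<theta> = real_of_int a / real_of_int b" unfolding c_def .
      have b1: "b \<noteq> 1"
      proof
        assume "b = 1"
        then have "2 * c = real_of_int a" using c2 c_def by simp
        moreover have "2 * c < -1"
        proof -
          have "real n / (real n + 2) > 1/2" using assms(1) by (simp add: field_simps)
          then show ?thesis using h by linarith
        qed
        moreover have "2 * c > -2" using cgt by simp
        ultimately have "real_of_int a < -1" "real_of_int a > -2" by linarith+
        then have "a < -1" "a > -2" by simp_all
        then show False by simp
      qed
      have "cos (real (2 * (n + 1)) * \<theta>) \<noteq> 1"
        by (rule niven_aux[OF cop _ c2]) (use bpos b1 in auto)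
      moreover have "real (2 * (n + 1)) * \<theta> = real (2 * l) * pi" unfolding \<theta>_def by (simp add: field_simps)
      ultimately show False by simp
    qed
    show "Phi n \<alpha> = 0 \<and> deriv (Phi n) \<alpha> = K * (cos (real l * pi / (real n + 1)) + real n / (real n + 2))
          \<and> deriv (Phi n) \<alpha> \<noteq> 0 \<and> K > 0"
      using Phi_val ev D Kpos cne unfolding c_def \<theta>_def by simp
  qed
  show ?thesis using odd_part even_part by blast
qed

end
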